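(* Let $(A,\mu,\alpha)$ be a Hom-associative algebra and $r=\sum_i x_i\otimes y_i\in A\otimes A$ with $(\alpha\otimes\alpha)(r)=r$ and $r$ a solution of the associative Hom-Yang-Baxter equation. Define $R:A\to A$ by $R(a)=\sum_i\alpha(x_i)(ay_i)$ (which equals $\sum_i(x_ia)\alpha(y_i)$). Then $R$ is an $\alpha^2$-Rota-Baxter operator, i.e. $R$ commutes with $\alpha$ and $R(\alpha^2(a))R(\alpha^2(b))=R\big(\alpha^2(a)R(b)+R(a)\alpha^2(b)\big)$ for all $a,b\in A$.
   Context: A Hom-associative algebra $(A,\mu,\alpha)$: linear space, bilinear $\mu(x\otimes y)=xy$, linear $\alpha$ with $\alpha(xy)=\alpha(x)\alpha(y)$ and $\alpha(x)(yz)=(xy)\alpha(z)$. For $r=\sum_ix_i\otimes y_i$ with $(\alpha\otimes\alpha)(r)=r$, $r$ solves the associative Hom-Yang-Baxter equation if $\sum_{i,j}\alpha(x_i)\otimes y_ix_j\otimes\alpha(y_j)=\sum_{i,j}x_ix_j\otimes\alpha(y_j)\otimes\alpha(y_i)+\sum_{i,j}\alpha(x_i)\otimes\alpha(x_j)\otimes y_jy_i$. *)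

theory Defs
  imports Complex_Main
begin

definition bilinear_map ::
  "('k::field \<Rightarrow> 'a::ab_group_add \<Rightarrow> 'a) \<Rightarrow> ('k \<Rightarrow> 'b::ab_group_add \<Rightarrow> 'b)
   \<Rightarrow> ('a \<Rightarrow> 'a \<Rightarrow> 'b) \<Rightarrow> bool" where
  "bilinear_map s t f \<longleftrightarrow>
     (\<forall>x. Vector_Spaces.linear s t (f x)) \<and> (\<forall>y. Vector_Spaces.linear s t (\<lambda>x. f x y))"

definition trilinear_map ::
  "('k::field \<Rightarrow> 'a::ab_group_add \<Rightarrow> 'a) \<Rightarrow> ('k \<Rightarrow> 'b::ab_group_add \<Rightarrow> 'b)
   \<Rightarrow> ('a \<Rightarrow> 'a \<Rightarrow> 'a \<Rightarrow> 'b) \<Rightarrow> bool" where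
  "trilinear_map s t f \<longleftrightarrow>
     (\<forall>y z. Vector_Spaces.linear s t (\<lambda>x. f x y z)) \<and>
     (\<forall>x z. Vector_Spaces.linear s t (\<lambda>y. f x y z)) \<and>
     (\<forall>x y. Vector_Spaces.linear s t (\<lambda>z. f x y z))"

definition hom_assoc_algebra ::
  "('k::field \<Rightarrow> 'a::ab_group_add \<Rightarrow> 'a) \<Rightarrow> ('a \<Rightarrow> 'a \<Rightarrow> 'a) \<Rightarrow> ('a \<Rightarrow> 'a) \<Rightarrow> bool" where
  "hom_assoc_algebra s mu alpha \<longleftrightarrow>
     Vector_Spaces.vector_space s \<and>
     bilinear_map s s mu \<and>
     Vector_Spaces.linear s s alpha \<and>
     (\<forall>x y. alpha (mu x y) = mu (alpha x) (alpha y)) \<and>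
     (\<forall>x y z. mu (alpha x) (mu y z) = mu (mu x y) (alpha z))"

text \<open>Elements of A \<otimes> A are represented by finite lists of pairs
  (the tensor sum of x_i \<otimes> y_i), elements of A \<otimes> A \<otimes> A by lists of triples.
  Two such representatives denote the same tensor iff every bilinear
  (resp. trilinear) form into the ground field agrees on them
  (over a field, (A\<otimes>A)* separates points, so this is exactly equality in A\<otimes>A).\<close>

definition tensor2_eq ::
  "('k::field \<Rightarrow> 'a::ab_group_add \<Rightarrow> 'a) \<Rightarrow> ('a \<times> 'a) list \<Rightarrow> ('a \<times> 'a) list \<Rightarrow> bool" where
  "tensor2_eq s u v \<longleftrightarrow>
     (\<forall>f. bilinear_map s ((*) :: 'k \<Rightarrow> 'k \<Rightarrow> 'k) f \<longrightarrow>
        (\<Sum>(a,b)\<leftarrow>u. f a b) = (\<Sum>(a,b)\<leftarrow>v. f a b))"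

definition tensor3_eq ::
  "('k::field \<Rightarrow> 'a::ab_group_add \<Rightarrow> 'a) \<Rightarrow> ('a \<times> 'a \<times> 'a) list \<Rightarrow> ('a \<times> 'a \<times> 'a) list \<Rightarrow> bool" where
  "tensor3_eq s u v \<longleftrightarrow>
     (\<forall>f. trilinear_map s ((*) :: 'k \<Rightarrow> 'k \<Rightarrow> 'k) f \<longrightarrow>
        (\<Sum>(a,b,c)\<leftarrow>u. f a b c) = (\<Sum>(a,b,c)\<leftarrow>v. f a b c))"

definition alpha_invariant ::
  "('k::field \<Rightarrow> 'a::ab_group_add \<Rightarrow> 'a) \<Rightarrow> ('a \<Rightarrow> 'a) \<Rightarrow> ('a \<times> 'a) list \<Rightarrow> bool" where
  "alpha_invariant s alpha r \<longleftrightarrow> tensor2_eq s (map (\<lambda>(x,y). (alpha x, alpha y)) r) r"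

definition assoc_HYBE ::
  "('k::field \<Rightarrow> 'a::ab_group_add \<Rightarrow> 'a) \<Rightarrow> ('a \<Rightarrow> 'a \<Rightarrow> 'a) \<Rightarrow> ('a \<Rightarrow> 'a) \<Rightarrow> ('a \<times> 'a) list \<Rightarrow> bool" where
  "assoc_HYBE s mu alpha r \<longleftrightarrow>
     tensor3_eq s
       [(alpha xi, mu yi xj, alpha yj). (xi,yi) \<leftarrow> r, (xj,yj) \<leftarrow> r]
       ([(mu xi xj, alpha yj, alpha yi). (xi,yi) \<leftarrow> r, (xj,yj) \<leftarrow> r] @
        [(alpha xi, alpha xj, mu yj yi). (xi,yi) \<leftarrow> r, (xj,yj) \<leftarrow> r])"

definition R_of ::
  "('a::ab_group_add \<Rightarrow> 'a \<Rightarrow> 'a) \<Rightarrow> ('a \<Rightarrow> 'a) \<Rightarrow> ('a \<times> 'a) list \<Rightarrow> 'a \<Rightarrow> 'a" where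
  "R_of mu alpha r a = (\<Sum>(x,y)\<leftarrow>r. mu (alpha x) (mu a y))"

definition alpha2_rota_baxter ::
  "('a::ab_group_add \<Rightarrow> 'a \<Rightarrow> 'a) \<Rightarrow> ('a \<Rightarrow> 'a) \<Rightarrow> ('a \<Rightarrow> 'a) \<Rightarrow> bool" where
  "alpha2_rota_baxter mu alpha R \<longleftrightarrow>
     (\<forall>a. R (alpha a) = alpha (R a)) \<and>
     (\<forall>a b. mu (R (alpha (alpha a))) (R (alpha (alpha b))) =
            R (mu (alpha (alpha a)) (R b) + mu (R a) (alpha (alpha b))))"

end

theory Submission imports Defs begin

lemma vs_mult: "vector_space ((*) :: 'k::field \<Rightarrow> 'k \<Rightarrow> 'k)"
  by unfold_locales (auto simp: algebra_simps)

lemma separate: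
  fixes s :: "'k::field \<Rightarrow> 'a::ab_group_add \<Rightarrow> 'a"
  assumes vs: "vector_space s"
    and eq: "\<And>\<phi>. Vector_Spaces.linear s ((*) :: 'k \<Rightarrow> 'k \<Rightarrow> 'k) \<phi> \<Longrightarrow> \<phi> u = \<phi> v"
  shows "u = v"
proof (rule ccontr)
  assume ne: "u \<noteq> v"
  interpret vs: vector_space s by (rule vs)
  interpret vp: vector_space_pair s "(*) :: 'k \<Rightarrow> 'k \<Rightarrow> 'k"
    by unfold_locales (auto simp: algebra_simps)
  define w where "w = u - v"
  have w0: "w \<noteq> 0" using ne by (simp add: w_def)
  have ind: "vs.independent {w}"
    using w0 by (intro vs.independent_insertI) (auto simp: vs.span_empty vs.independent_empty)
  define \<phi> where "\<phi> = vp.construct {w} (\<lambda>_. 1::'k)"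
  have lin: "Vector_Spaces.linear s (*) \<phi>" unfolding \<phi>_def by (rule vp.linear_construct[OF ind])
  have "\<phi> w = 1" unfolding \<phi>_def by (rule vp.construct_basis[OF ind]) simp
  moreover have "\<phi> w = \<phi> u - \<phi> v" unfolding w_def by (rule vp.linear_diff[OF lin])
  ultimately show False using eq[OF lin] by simp
qed

lemma comp_lin: "Vector_Spaces.linear s t f \<Longrightarrow> Vector_Spaces.linear t u g \<Longrightarrow> Vector_Spaces.linear s u (\<lambda>x. g (f x))"
  using Vector_Spaces.linear_compose[of s t f u g] by (simp add: o_def)

lemma linear_sum_list:
  assumes "Vector_Spaces.linear s t f"
  shows "f (sum_list (map g xs)) = sum_list (map (\<lambda>p. f (g p)) xs)"
proof -
  interpret Vector_Spaces.linear s t f by fact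
  show ?thesis by (induction xs) (simp_all add: add zero)
qed

context
  fixes s :: "'k::field \<Rightarrow> 'a::ab_group_add \<Rightarrow> 'a"
    and mu :: "'a \<Rightarrow> 'a \<Rightarrow> 'a" and alpha :: "'a \<Rightarrow> 'a"
  assumes H: "hom_assoc_algebra s mu alpha"
begin

lemma VS: "vector_space s" using H by (simp add: hom_assoc_algebra_def)

lemma linR: "Vector_Spaces.linear s s (mu x)"
  using H by (simp add: hom_assoc_algebra_def bilinear_map_def)
lemma linL: "Vector_Spaces.linear s s (\<lambda>x. mu x y)"
  using H by (simp add: hom_assoc_algebra_def bilinear_map_def)
lemma linA: "Vector_Spaces.linear s s alpha"
  using H by (simp add: hom_assoc_algebra_def)

lemma mu_addL: "mu (x + y) z = mu x z + mu y z"
  using linL[of z] by (simp add: Vector_Spaces.linear_iff)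
lemma mu_addR: "mu z (x + y) = mu z x + mu z y"
  using linR[of z] by (simp add: Vector_Spaces.linear_iff)
lemma mu_scaleL: "mu (s c x) z = s c (mu x z)"
  using linL[of z] by (simp add: Vector_Spaces.linear_iff)
lemma mu_scaleR: "mu z (s c x) = s c (mu z x)"
  using linR[of z] by (simp add: Vector_Spaces.linear_iff)
lemma alpha_add: "alpha (x + y) = alpha x + alpha y"
  using linA by (simp add: Vector_Spaces.linear_iff)
lemma alpha_scale: "alpha (s c x) = s c (alpha x)"
  using linA by (simp add: Vector_Spaces.linear_iff)
lemma mu_0L: "mu 0 z = 0"
  by (metis add_cancel_left_right mu_addL)
lemma mu_0R: "mu z 0 = 0"
  by (metis add_cancel_left_right mu_addR)
lemma mu_sumL: "mu (sum_list (map f xs)) z = sum_list (map (\<lambda>p. mu (f p) z) xs)"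
  by (rule linear_sum_list[OF linL])
lemma mu_sumR: "mu z (sum_list (map f xs)) = sum_list (map (\<lambda>p. mu z (f p)) xs)"
  by (rule linear_sum_list[OF linR])
lemma alpha_mu: "alpha (mu x y) = mu (alpha x) (alpha y)"
  using H by (simp add: hom_assoc_algebra_def)
lemma hassoc: "mu (alpha x) (mu y z) = mu (mu x y) (alpha z)"
  using H by (simp add: hom_assoc_algebra_def)

lemmas alg = mu_addL mu_addR mu_scaleL mu_scaleR alpha_add alpha_scale

lemma lin_phi:
  assumes "Vector_Spaces.linear s ((*) :: 'k \<Rightarrow> 'k \<Rightarrow> 'k) \<phi>"
  shows "\<phi> (x + y) = \<phi> x + \<phi> y" "\<phi> (s c x) = c * \<phi> x"
  using assms by (simp_all add: Vector_Spaces.linear_iff)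

lemma tensor2_lift:
  assumes T: "tensor2_eq s u v" and F: "bilinear_map s s F"
  shows "(\<Sum>p\<leftarrow>u. F (fst p) (snd p)) = (\<Sum>p\<leftarrow>v. F (fst p) (snd p))"
proof (rule separate[OF VS])
  fix \<phi> :: "'a \<Rightarrow> 'k" assume l: "Vector_Spaces.linear s (*) \<phi>"
  have "bilinear_map s (*) (\<lambda>x y. \<phi> (F x y))"
    using F l unfolding bilinear_map_def
    by (auto intro: comp_lin)
  then have "(\<Sum>(a,b)\<leftarrow>u. \<phi> (F a b)) = (\<Sum>(a,b)\<leftarrow>v. \<phi> (F a b))"
    using T unfolding tensor2_eq_def by blast
  then show "\<phi> (\<Sum>p\<leftarrow>u. F (fst p) (snd p)) = \<phi> (\<Sum>p\<leftarrow>v. F (fst p) (snd p))"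
    by (simp add: linear_sum_list[OF l] split_def)
qed

lemma tensor3_lift:
  assumes T: "tensor3_eq s u v" and F: "trilinear_map s s F"
  shows "(\<Sum>p\<leftarrow>u. F (fst p) (fst (snd p)) (snd (snd p))) = (\<Sum>p\<leftarrow>v. F (fst p) (fst (snd p)) (snd (snd p)))"
proof (rule separate[OF VS])
  fix \<phi> :: "'a \<Rightarrow> 'k" assume l: "Vector_Spaces.linear s (*) \<phi>"
  have "trilinear_map s (*) (\<lambda>x y z. \<phi> (F x y z))"
    using F unfolding trilinear_map_def
    by (metis (no_types) comp_lin[OF _ l])
  then have "(\<Sum>(a,b,c)\<leftarrow>u. \<phi> (F a b c)) = (\<Sum>(a,b,c)\<leftarrow>v. \<phi> (F a b c))"
    using T unfolding tensor3_eq_def by blast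
  then show "\<phi> (\<Sum>p\<leftarrow>u. F (fst p) (fst (snd p)) (snd (snd p))) = \<phi> (\<Sum>p\<leftarrow>v. F (fst p) (fst (snd p)) (snd (snd p)))"
    by (simp add: linear_sum_list[OF l] split_def)
qed


lemma sum_list_concat_map: "sum_list (map f (concat xss)) = sum_list (map (\<lambda>xs. sum_list (map f xs)) xss)"
  by (induction xss) auto

lemma lin_sum_fun:
  assumes "\<And>q. Vector_Spaces.linear s s (f q)"
  shows "Vector_Spaces.linear s s (\<lambda>x. \<Sum>q\<leftarrow>qs. f q x)"
proof -
  interpret vector_space s by (rule VS)
  show ?thesis
  proof (induction qs)
    case Nil then show ?case
      by (simp add: Vector_Spaces.linear_iff VS)
  next
    case (Cons a qs)
    then show ?case using assms[of a]
      by (simp add: Vector_Spaces.linear_iff VS scale_right_distrib add_ac)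
  qed
qed

lemma bil_sum:
  assumes "\<And>q. bilinear_map s s (\<lambda>x y. G x y q)"
  shows "bilinear_map s s (\<lambda>x y. \<Sum>q\<leftarrow>qs. G x y q)"
  using assms unfolding bilinear_map_def
  by (auto intro!: lin_sum_fun)

definition DS :: "('a \<times> 'a) list \<Rightarrow> ('a \<times> 'a \<Rightarrow> 'a \<times> 'a \<Rightarrow> 'a) \<Rightarrow> 'a" where
  "DS r G = (\<Sum>p\<leftarrow>r. \<Sum>q\<leftarrow>r. G p q)"

lemma inv_p:
  assumes I: "alpha_invariant s alpha r"
    and B: "\<And>q. bilinear_map s s (\<lambda>x y. G (x,y) q)"
  shows "DS r (\<lambda>p q. G (alpha (fst p), alpha (snd p)) q) = DS r G"
proof -
  have "(\<Sum>p\<leftarrow>map (\<lambda>(x,y). (alpha x, alpha y)) r. (\<lambda>x y. \<Sum>q\<leftarrow>r. G (x,y) q) (fst p) (snd p))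
      = (\<Sum>p\<leftarrow>r. (\<lambda>x y. \<Sum>q\<leftarrow>r. G (x,y) q) (fst p) (snd p))"
    using I unfolding alpha_invariant_def
    by (rule tensor2_lift) (rule bil_sum[OF B])
  then show ?thesis by (simp add: DS_def comp_def split_def)
qed

lemma inv_q:
  assumes I: "alpha_invariant s alpha r"
    and B: "\<And>p. bilinear_map s s (\<lambda>x y. G p (x,y))"
  shows "DS r (\<lambda>p q. G p (alpha (fst q), alpha (snd q))) = DS r G"
proof -
  have "(\<Sum>q\<leftarrow>map (\<lambda>(x,y). (alpha x, alpha y)) r. (\<lambda>x y. G p (x,y)) (fst q) (snd q))
      = (\<Sum>q\<leftarrow>r. (\<lambda>x y. G p (x,y)) (fst q) (snd q))" for p
    using I unfolding alpha_invariant_def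
    by (rule tensor2_lift) (rule B)
  then show ?thesis unfolding DS_def by (simp add: comp_def split_def)
qed

lemma hybe_lift:
  assumes Y: "assoc_HYBE s mu alpha r" and T: "trilinear_map s s T"
  shows "DS r (\<lambda>p q. T (alpha (fst p)) (mu (snd p) (fst q)) (alpha (snd q)))
       = DS r (\<lambda>p q. T (mu (fst p) (fst q)) (alpha (snd q)) (alpha (snd p)))
       + DS r (\<lambda>p q. T (alpha (fst p)) (alpha (fst q)) (mu (snd q) (snd p)))"
  using tensor3_lift[OF Y[unfolded assoc_HYBE_def] T]
  by (simp add: DS_def sum_list_concat_map comp_def split_def)


lemma bil_alpha:
  assumes "bilinear_map s s F"
  shows "bilinear_map s s (\<lambda>x y. F (alpha x) (alpha y))"
proof -
  have l1: "Vector_Spaces.linear s s (\<lambda>x. F x y)" "Vector_Spaces.linear s s (F x)" for x y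
    using assms unfolding bilinear_map_def by auto
  show ?thesis unfolding bilinear_map_def
    using comp_lin[OF linA l1(1)] comp_lin[OF linA l1(2)] by auto
qed

lemma inv_pn:
  assumes I: "alpha_invariant s alpha r"
    and B: "\<And>u v. bilinear_map s s (\<lambda>x y. G x y u v)"
  shows "DS r (\<lambda>p q. G ((alpha^^n) (fst p)) ((alpha^^n) (snd p)) (fst q) (snd q))
       = DS r (\<lambda>p q. G (fst p) (snd p) (fst q) (snd q))"
proof (induction n)
  case 0 then show ?case by simp
next
  case (Suc n)
  have b: "bilinear_map s s (\<lambda>x y. G ((alpha^^n) x) ((alpha^^n) y) u v)" for u v
  proof (induction n)
    case 0 then show ?case using B by simp
  next
    case (Suc n)
    from bil_alpha[OF Suc] show ?case by (simp add: funpow_swap1)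
  qed
  have "DS r (\<lambda>p q. (\<lambda>p q. G ((alpha^^n) (fst p)) ((alpha^^n) (snd p)) (fst q) (snd q)) (alpha (fst p), alpha (snd p)) q)
     = DS r (\<lambda>p q. G ((alpha^^n) (fst p)) ((alpha^^n) (snd p)) (fst q) (snd q))"
    by (rule inv_p[OF I]) (simp add: b)
  with Suc show ?case by (simp add: funpow_swap1)
qed

lemma inv_qn:
  assumes I: "alpha_invariant s alpha r"
    and B: "\<And>u v. bilinear_map s s (\<lambda>x y. G u v x y)"
  shows "DS r (\<lambda>p q. G (fst p) (snd p) ((alpha^^n) (fst q)) ((alpha^^n) (snd q)))
       = DS r (\<lambda>p q. G (fst p) (snd p) (fst q) (snd q))"
proof (induction n)
  case 0 then show ?case by simp
next
  case (Suc n)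
  have b: "bilinear_map s s (\<lambda>x y. G u v ((alpha^^n) x) ((alpha^^n) y))" for u v
  proof (induction n)
    case 0 then show ?case using B by simp
  next
    case (Suc n)
    from bil_alpha[OF Suc] show ?case by (simp add: funpow_swap1)
  qed
  have "DS r (\<lambda>p q. (\<lambda>p q. G (fst p) (snd p) ((alpha^^n) (fst q)) ((alpha^^n) (snd q))) p (alpha (fst q), alpha (snd q)))
     = DS r (\<lambda>p q. G (fst p) (snd p) ((alpha^^n) (fst q)) ((alpha^^n) (snd q)))"
    by (rule inv_q[OF I]) (simp add: b)
  with Suc show ?case by (simp add: funpow_swap1)
qed

lemma h2: "mu (mu (alpha x1) (alpha x2)) (mu y z) = mu (mu (mu x1 x2) y) (alpha z)"
  by (metis alpha_mu hassoc)
lemma h3: "mu (mu (mu (alpha x1) (alpha x2)) (alpha x3)) (mu y z) = mu (mu (mu (mu x1 x2) x3) y) (alpha z)"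
  by (metis alpha_mu hassoc)
lemma h4: "mu (mu (mu (mu (alpha x1) (alpha x2)) (alpha x3)) (alpha x4)) (mu y z) = mu (mu (mu (mu (mu x1 x2) x3) x4) y) (alpha z)"
  by (metis alpha_mu hassoc)

lemmas HS = alpha_mu hassoc h2 h3 h4


lemma R_comm:
  assumes I: "alpha_invariant s alpha r"
  shows "R_of mu alpha r (alpha a) = alpha (R_of mu alpha r a)"
proof -
  have "(\<Sum>p\<leftarrow>map (\<lambda>(x,y). (alpha x, alpha y)) r. (\<lambda>x y. mu (alpha x) (mu (alpha a) y)) (fst p) (snd p))
      = (\<Sum>p\<leftarrow>r. (\<lambda>x y. mu (alpha x) (mu (alpha a) y)) (fst p) (snd p))"
    using I unfolding alpha_invariant_def
    by (rule tensor2_lift) (simp add: bilinear_map_def Vector_Spaces.linear_iff VS alg)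
  then show ?thesis
    by (simp add: R_of_def linear_sum_list[OF linA] alpha_mu split_def comp_def)
qed

lemma R_rb:
  assumes I: "alpha_invariant s alpha r" and Y: "assoc_HYBE s mu alpha r"
  shows "mu (R_of mu alpha r (alpha (alpha a))) (R_of mu alpha r (alpha (alpha b))) =
     R_of mu alpha r (mu (alpha (alpha a)) (R_of mu alpha r b) + mu (R_of mu alpha r a) (alpha (alpha b)))"
proof -
  define Lf where "Lf = (\<lambda>xi yi xj yj. mu (mu (alpha xi) (mu (alpha (alpha a)) yi)) (mu (alpha xj) (mu (alpha (alpha b)) yj)))"
  define Tm where "Tm = (\<lambda>u v w. mu (mu (mu (alpha u) (alpha (alpha a))) (alpha (alpha v))) (mu (alpha (alpha (alpha b))) (alpha (alpha w))))"
  define Bf where "Bf = (\<lambda>xi yi xj yj. mu (alpha xi) (mu (mu (mu (alpha xj) (mu a yj)) (alpha (alpha b))) yi))"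
  define Af where "Af = (\<lambda>xi yi xj yj. mu (alpha xi) (mu (mu (alpha (alpha a)) (mu (alpha xj) (mu b yj))) yi))"
  let ?D = "\<lambda>F. DS r (\<lambda>p q. F (fst p) (snd p) (fst q) (snd q))"
  have e1: "mu (R_of mu alpha r (alpha (alpha a))) (R_of mu alpha r (alpha (alpha b))) = ?D Lf"
    unfolding R_of_def DS_def Lf_def split_def mu_sumL by (simp add: mu_sumR)
  have bL1: "bilinear_map s s (\<lambda>x y. Lf x y u v)" for u v
    by (simp add: Lf_def bilinear_map_def Vector_Spaces.linear_iff VS alg)
  have bL2: "bilinear_map s s (\<lambda>x y. Lf ((alpha^^2) u) ((alpha^^2) v) x y)" for u v
    by (simp add: Lf_def bilinear_map_def Vector_Spaces.linear_iff VS alg)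
  have e2: "?D Lf = ?D (\<lambda>xi yi xj yj. Lf ((alpha^^2) xi) ((alpha^^2) yi) ((alpha^^2) xj) ((alpha^^2) yj))"
    using inv_pn[OF I, where G=Lf and n=2, OF bL1]
      inv_qn[OF I, where G="\<lambda>u v x y. Lf ((alpha^^2) u) ((alpha^^2) v) x y" and n=2, OF bL2] by simp
  have e3: "?D (\<lambda>xi yi xj yj. Lf ((alpha^^2) xi) ((alpha^^2) yi) ((alpha^^2) xj) ((alpha^^2) yj))
     = DS r (\<lambda>p q. Tm (alpha (fst p)) (mu (snd p) (fst q)) (alpha (snd q)))"
    by (simp add: Lf_def Tm_def HS numeral_2_eq_2)
  have tri: "trilinear_map s s Tm"
    by (simp add: Tm_def trilinear_map_def Vector_Spaces.linear_iff VS alg)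
  note e4 = hybe_lift[OF Y tri]
  have e5: "DS r (\<lambda>p q. Tm (mu (fst p) (fst q)) (alpha (snd q)) (alpha (snd p)))
     = ?D (\<lambda>xi yi xj yj. Bf ((alpha^^3) xi) ((alpha^^3) yi) xj yj)"
    by (simp add: Bf_def Tm_def HS numeral_3_eq_3)
  have e6: "DS r (\<lambda>p q. Tm (alpha (fst p)) (alpha (fst q)) (mu (snd q) (snd p)))
     = ?D (\<lambda>xi yi xj yj. Af ((alpha^^3) xi) ((alpha^^3) yi) xj yj)"
    by (simp add: Af_def Tm_def HS numeral_3_eq_3)
  have bB: "bilinear_map s s (\<lambda>x y. Bf x y u v)" for u v
    by (simp add: Bf_def bilinear_map_def Vector_Spaces.linear_iff VS alg)
  have bA: "bilinear_map s s (\<lambda>x y. Af x y u v)" for u v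
    by (simp add: Af_def bilinear_map_def Vector_Spaces.linear_iff VS alg)
  have e7: "?D (\<lambda>xi yi xj yj. Bf ((alpha^^3) xi) ((alpha^^3) yi) xj yj) = ?D Bf"
    using inv_pn[OF I, where G=Bf and n=3, OF bB] by simp
  have e8: "?D (\<lambda>xi yi xj yj. Af ((alpha^^3) xi) ((alpha^^3) yi) xj yj) = ?D Af"
    using inv_pn[OF I, where G=Af and n=3, OF bA] by simp
  have e9: "R_of mu alpha r (mu (alpha (alpha a)) (R_of mu alpha r b) + mu (R_of mu alpha r a) (alpha (alpha b)))
     = ?D Bf + ?D Af"
    by (simp add: R_of_def DS_def Af_def Bf_def split_def mu_sumL mu_sumR mu_addL mu_addR sum_list_addf add.commute)
  show ?thesis using e1 e2 e3 e4 e5 e6 e7 e8 e9 by simp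
qed

end

theorem mainTheorem10:
  fixes s :: "'k::field \<Rightarrow> 'a::ab_group_add \<Rightarrow> 'a"
    and mu :: "'a \<Rightarrow> 'a \<Rightarrow> 'a" and alpha :: "'a \<Rightarrow> 'a"
    and r :: "('a \<times> 'a) list"
  assumes "hom_assoc_algebra s mu alpha"
    and "alpha_invariant s alpha r"
    and "assoc_HYBE s mu alpha r"
  shows "alpha2_rota_baxter mu alpha (R_of mu alpha r)"
  unfolding alpha2_rota_baxter_def
  using R_comm[OF assms(1,2)] R_rb[OF assms(1,2,3)] by blast

end
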